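(* For all positive integers $m$ and all $r = 0,1,\ldots,m-1$, the stopping distance of $H(r,m)$ is $2^{r+1}$.
   Context: All matrices are binary. The matrices $G(r,m)$, $0\le r\le m$, are defined recursively by $G(m,m) = I_{2^m}$, $G(0,m) = (11\cdots1)$ (length $2^m$), and for $0<r<m$, $G(r,m) = \begin{pmatrix} G(r,m-1) & G(r,m-1) \\ \mathbf{0} & G(r-1,m-1)\end{pmatrix}$. The matrices $H(r,m)$ are defined by: for all $m \ge 0$, $H(0,m) = (11\cdots1)$ (length $2^m$), $H(m-1,m) = G(m-1,m)$, $H(m,m) = I_{2^m}$; and for all positive integers $m$ and $r = 1,\ldots,m-2$, $$H(r,m) = \begin{pmatrix} H(r,m-1) & H(r,m-1) \\ \mathbf{0} & H(r-1,m-1) \\ H(r-1,m-1) & \mathbf{0}\end{pmatrix}.$$ For a matrix $H$, the stopping distance $s(H)$ is the largest integer such that for every set of $s(H)-1$ or fewer columns of $H$, the projection of $H$ onto those columns contains at least one row of Hamming weight exactly one. *)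

theory Defs
  imports Main
begin

text \<open>Binary matrices are represented as lists of rows; each row is a list of
  booleans (True = 1, False = 0) of the common length (number of columns).\<close>

type_synonym bmat = "bool list list"

definition ones_row :: "nat \<Rightarrow> bmat" where
  "ones_row n = [replicate n True]"

definition ident :: "nat \<Rightarrow> bmat" where
  "ident n = map (\<lambda>i. map (\<lambda>j. i = j) [0..<n]) [0..<n]"

definition dup :: "bmat \<Rightarrow> bmat" where
  "dup A = map (\<lambda>x. x @ x) A"

definition zl :: "nat \<Rightarrow> bmat \<Rightarrow> bmat" where
  "zl n A = map (\<lambda>x. replicate n False @ x) A"

definition zr :: "nat \<Rightarrow> bmat \<Rightarrow> bmat" where
  "zr n A = map (\<lambda>x. x @ replicate n False) A"

function Gmat :: "nat \<Rightarrow> nat \<Rightarrow> bmat" where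
  "Gmat r m =
     (if r = m then ident (2^m)
      else if r = 0 then ones_row (2^m)
      else if r < m then dup (Gmat r (m-1)) @ zl (2^(m-1)) (Gmat (r-1) (m-1))
      else [])"
  by pat_completeness auto
termination by (relation "measure snd") auto

function Hmat :: "nat \<Rightarrow> nat \<Rightarrow> bmat" where
  "Hmat r m =
     (if r = m then ident (2^m)
      else if r = 0 then ones_row (2^m)
      else if r + 1 = m then Gmat r m
      else if r < m then
        dup (Hmat r (m-1)) @ zl (2^(m-1)) (Hmat (r-1) (m-1))
          @ zr (2^(m-1)) (Hmat (r-1) (m-1))
      else [])"
  by pat_completeness auto
termination by (relation "measure snd") auto

definition ncols :: "bmat \<Rightarrow> nat" where
  "ncols H = (if H = [] then 0 else length (hd H))"

definition has_weight_one_row :: "bmat \<Rightarrow> nat set \<Rightarrow> bool" where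
  "has_weight_one_row H S = (\<exists>row \<in> set H. card {j \<in> S. row ! j} = 1)"

definition stopping_distance :: "bmat \<Rightarrow> nat" where
  "stopping_distance H = (GREATEST s. \<forall>S. S \<subseteq> {..<ncols H} \<and> S \<noteq> {} \<and> card S \<le> s - 1
                                   \<longrightarrow> has_weight_one_row H S)"

end

theory Submission
  imports Defs
begin

definition wt :: "bool list \<Rightarrow> nat set \<Rightarrow> nat" where
  "wt x S = card {j\<in>S. x!j}"

lemma hw1_wt: "has_weight_one_row H S = (\<exists>x\<in>set H. wt x S = 1)"
  by (simp add: has_weight_one_row_def wt_def)

lemma fin_hi: "finite (S::nat set) \<Longrightarrow> finite {k. n+k\<in>S}"
  by (rule finite_subset[of _ "(\<lambda>j. j-n) ` S"]) (auto simp: image_iff intro!: bexI[of _ "n+_"])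

lemma wt_append:
  assumes "finite S" "length x = n"
  shows "wt (x@y) S = wt x {j\<in>S. j<n} + wt y {k. n+k\<in>S}"
proof -
  have e: "{j\<in>S. (x@y)!j} = {j\<in>{j\<in>S. j<n}. x!j} \<union> (\<lambda>k. n+k) ` {k\<in>{k. n+k\<in>S}. y!k}"
  proof (rule set_eqI, rule iffI)
    fix j assume "j \<in> {j\<in>S. (x@y)!j}"
    then show "j \<in> {j\<in>{j\<in>S. j<n}. x!j} \<union> (\<lambda>k. n+k) ` {k\<in>{k. n+k\<in>S}. y!k}"
      using assms(2) by (cases "j<n") (auto simp: nth_append image_iff intro!: exI[of _ "j-n"])
  next
    fix j assume "j \<in> {j\<in>{j\<in>S. j<n}. x!j} \<union> (\<lambda>k. n+k) ` {k\<in>{k. n+k\<in>S}. y!k}"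
    then show "j \<in> {j\<in>S. (x@y)!j}" using assms(2) by (auto simp: nth_append)
  qed
  have f1: "finite {j\<in>{j\<in>S. j<n}. x!j}" using assms(1) by simp
  have f2: "finite ((\<lambda>k. n+k) ` {k\<in>{k. n+k\<in>S}. y!k})" using fin_hi[OF assms(1), of n] by simp
  have d: "{j\<in>{j\<in>S. j<n}. x!j} \<inter> (\<lambda>k. n+k) ` {k\<in>{k. n+k\<in>S}. y!k} = {}" by auto
  show ?thesis unfolding wt_def e
    by (subst card_Un_disjoint[OF f1 f2 d]) (simp add: card_image)
qed

lemma wt_zero: "A \<subseteq> {..<n} \<Longrightarrow> wt (replicate n False) A = 0"
  proof -
  assume "A \<subseteq> {..<n}"
  then have e: "{j\<in>A. replicate n False ! j} = {}" by auto
  show ?thesis unfolding wt_def e by simp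
qed

lemma wt_empty: "wt x {} = 0" by (simp add: wt_def)

lemma wt_ident: "i<n \<Longrightarrow> A \<subseteq> {..<n} \<Longrightarrow> wt (map (\<lambda>j. i=j) [0..<n]) A = (if i\<in>A then 1 else 0)"
  unfolding wt_def by (subgoal_tac "{j\<in>A. map (\<lambda>j. i=j) [0..<n] ! j} = (if i\<in>A then {i} else {})") auto

lemma card_split:
  assumes "finite (S::nat set)"
  shows "card S = card {j\<in>S. j<n} + card {k. n+k\<in>S}"
proof -
  have e: "S = {j\<in>S. j<n} \<union> (\<lambda>k. n+k) ` {k. n+k\<in>S}"
    by (auto simp: image_iff) (metis le_add_diff_inverse not_less)
  have "card S = card ({j\<in>S. j<n} \<union> (\<lambda>k. n+k) ` {k. n+k\<in>S})" using e by simp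
  also have "\<dots> = card {j\<in>S. j<n} + card ((\<lambda>k. n+k) ` {k. n+k\<in>S})"
    by (rule card_Un_disjoint) (use assms fin_hi[OF assms] in auto)
  finally show ?thesis by (simp add: card_image)
qed

lemma wt_ones: "A \<subseteq> {..<n} \<Longrightarrow> wt (replicate n True) A = card A"
proof -
  assume "A \<subseteq> {..<n}"
  then have e: "{j\<in>A. replicate n True ! j} = A" by auto
  show ?thesis unfolding wt_def e by simp
qed

lemma set_dup: "set (dup A) = (\<lambda>x. x@x) ` set A" by (simp add: dup_def)
lemma set_zl: "set (zl n A) = (\<lambda>x. replicate n False @ x) ` set A" by (simp add: zl_def)
lemma set_zr: "set (zr n A) = (\<lambda>x. x @ replicate n False) ` set A" by (simp add: zr_def)
lemma set_ident: "set (ident n) = (\<lambda>i. map (\<lambda>j. i=j) [0..<n]) ` {..<n}"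
  by (auto simp: ident_def)

declare Gmat.simps[simp del] Hmat.simps[simp del]

lemma G_base: "Gmat 0 (Suc 0) = ones_row 2"
  by (subst Gmat.simps) simp

lemma G_step: "Gmat (Suc k) (Suc (Suc k)) = dup (ident (2^Suc k)) @ zl (2^Suc k) (Gmat k (Suc k))"
  by (subst Gmat.simps) (simp add: Gmat.simps[of "Suc k" "Suc k"])

lemma H_zero: "0 < m \<Longrightarrow> Hmat 0 m = ones_row (2^m)"
  by (subst Hmat.simps) simp

lemma H_top: "0 < m \<Longrightarrow> Hmat m (Suc m) = Gmat m (Suc m)"
  by (subst Hmat.simps) simp

lemma H_step: "0 < r \<Longrightarrow> r + 1 < m \<Longrightarrow> Hmat r m = dup (Hmat r (m-1)) @ zl (2^(m-1)) (Hmat (r-1) (m-1))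
          @ zr (2^(m-1)) (Hmat (r-1) (m-1))"
  by (subst Hmat.simps) simp

lemma hi_sub: "S \<subseteq> {..<2*(n::nat)} \<Longrightarrow> {k. n+k\<in>S} \<subseteq> {..<n}" by auto
lemma lo_sub: "{j\<in>S. j<n} \<subseteq> {..<n}" by auto
lemma fin_sub: "S \<subseteq> {..<(N::nat)} \<Longrightarrow> finite S" using finite_subset by blast

lemma G_props:
  "Gmat m (Suc m) \<noteq> [] \<and> (\<forall>x\<in>set (Gmat m (Suc m)). length x = 2^Suc m \<and> wt x {..<2^Suc m} \<noteq> 1)
   \<and> (\<forall>S. S \<subseteq> {..<2^Suc m} \<longrightarrow> S \<noteq> {} \<longrightarrow> S \<noteq> {..<2^Suc m} \<longrightarrow> (\<exists>x\<in>set (Gmat m (Suc m)). wt x S = 1))"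
proof (induction m)
  case 0
  have "\<exists>x\<in>set (Gmat 0 (Suc 0)). wt x S = 1" if "S \<subseteq> {..<2}" "S \<noteq> {}" "S \<noteq> {..<2}" for S
  proof -
    have "card S < card {..<2::nat}" using that by (intro psubset_card_mono) auto
    moreover have "card S > 0" using that fin_sub[OF that(1)] by (simp add: card_gt_0_iff)
    ultimately have "card S = 1" by simp
    then show ?thesis using that(1) by (simp add: G_base ones_row_def wt_ones)
  qed
  then show ?case by (simp add: G_base ones_row_def wt_ones)
next
  case (Suc k)
  define n where "n = (2::nat)^Suc k"
  have N: "(2::nat)^Suc (Suc k) = 2*n" by (simp add: n_def)
  have npos: "0 < n" by (simp add: n_def)
  have eq: "Gmat (Suc k) (Suc (Suc k)) = dup (ident n) @ zl n (Gmat k (Suc k))"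
    by (simp add: n_def G_step)
  define G where "G = Gmat k (Suc k)"
  have ne: "G \<noteq> []" and rows: "\<And>x. x\<in>set G \<Longrightarrow> length x = n \<and> wt x {..<n} \<noteq> 1"
    and propG: "\<And>S. S \<subseteq> {..<n} \<Longrightarrow> S \<noteq> {} \<Longrightarrow> S \<noteq> {..<n} \<Longrightarrow> (\<exists>x\<in>set G. wt x S = 1)"
    using Suc.IH unfolding G_def n_def by auto
  have hifull: "{k. n+k \<in> {..<2*n}} = {..<n}" by auto
  have lofull: "{j\<in>{..<2*n}. j<n} = {..<n}" by auto
  have A: "length x = 2*n \<and> wt x {..<2*n} \<noteq> 1" if "x \<in> set (dup (ident n) @ zl n G)" for x
  proof -
    from that consider (a) i where "i<n" "x = map (\<lambda>j. i=j) [0..<n] @ map (\<lambda>j. i=j) [0..<n]"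
      | (b) g where "g \<in> set G" "x = replicate n False @ g"
      by (auto simp: set_dup set_zl set_ident)
    then show ?thesis
    proof cases
      case a
      let ?r = "map (\<lambda>j. i=j) [0..<n]"
      have "wt x {..<2*n} = wt ?r {..<n} + wt ?r {..<n}"
        unfolding a(2) wt_append[of "{..<2*n}" ?r n ?r, OF finite_lessThan length_map[of _ "[0..<n]", unfolded length_upt diff_zero]]
        unfolding hifull lofull ..
      also have "\<dots> = 2" using wt_ident[OF a(1), of "{..<n}"] a(1) by simp
      finally show ?thesis using a by simp
    next
      case b
      have "wt x {..<2*n} = wt (replicate n False) {..<n} + wt g {..<n}"
        unfolding b(2) wt_append[of "{..<2*n}" "replicate n False" n g, OF finite_lessThan length_replicate]
        unfolding hifull lofull ..
      also have "\<dots> = wt g {..<n}" using wt_zero[of "{..<n}" n] by simp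
      finally show ?thesis using b rows[OF b(1)] by simp
    qed
  qed
  have B: "\<exists>x\<in>set (dup (ident n) @ zl n G). wt x S = 1"
    if S: "S \<subseteq> {..<2*n}" "S \<noteq> {}" "S \<noteq> {..<2*n}" for S
  proof -
    define L where "L = {j\<in>S. j<n}"
    define R where "R = {k. n+k\<in>S}"
    have fS: "finite S" using fin_sub[OF S(1)] .
    have Lsub: "L \<subseteq> {..<n}" unfolding L_def by auto
    have Rsub: "R \<subseteq> {..<n}" unfolding R_def using hi_sub[OF S(1)] .
    have wS: "wt (a@b) S = wt a L + wt b R" if "length a = n" for a b
      using wt_append[OF fS that, of b] unfolding L_def R_def .
    show ?thesis
    proof (cases "L = R")
      case False
      then obtain i where i: "i \<in> L \<and> i \<notin> R \<or> i \<in> R \<and> i \<notin> L" by blast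
      then have "i < n" using Lsub Rsub by auto
      let ?r = "map (\<lambda>j. i=j) [0..<n]"
      have "?r @ ?r \<in> set (dup (ident n) @ zl n G)" using \<open>i<n\<close> by (auto simp: set_dup set_ident)
      moreover have "wt (?r @ ?r) S = 1"
        unfolding wS[OF length_map[of _ "[0..<n]", unfolded length_upt diff_zero]]
        using i wt_ident[OF \<open>i<n\<close> Lsub] wt_ident[OF \<open>i<n\<close> Rsub] by auto
      ultimately show ?thesis by blast
    next
      case True
      have "L \<noteq> {}"
      proof
        assume "L = {}"
        then have "card S = 0" using card_split[OF fS, of n] True unfolding L_def R_def by simp
        then show False using fS S(2) by simp
      qed
      moreover have "L \<noteq> {..<n}"
      proof
        assume Lf: "L = {..<n}"
        have "S = {..<2*n}"
        proof
          show "{..<2*n} \<subseteq> S"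
          proof
            fix j assume "j \<in> {..<2*n}"
            show "j \<in> S"
            proof (cases "j<n")
              case True
              then have "j \<in> L" using Lf by simp
              then show ?thesis unfolding L_def by simp
            next
              case False
              then have "j - n < n" using \<open>j \<in> {..<2*n}\<close> by simp
              then have "j - n \<in> R" using Lf True by simp
              then have "n + (j-n) \<in> S" unfolding R_def by simp
              then show ?thesis using False by simp
            qed
          qed
        qed (use S in auto)
        then show False using S(3) by simp
      qed
      ultimately obtain g where g: "g \<in> set G" "wt g R = 1" using propG[OF Lsub] True by auto
      have "replicate n False @ g \<in> set (dup (ident n) @ zl n G)" using g by (auto simp: set_zl)
      moreover have "wt (replicate n False @ g) S = 1"
        unfolding wS[OF length_replicate] using g wt_zero[OF Lsub] by simp
      ultimately show ?thesis by blast
    qed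
  qed
  show ?case unfolding N eq G_def[symmetric] using A B ne by (auto simp: zl_def)
qed

lemma H_props:
  "0 < m \<Longrightarrow> r < m \<Longrightarrow> Hmat r m \<noteq> [] \<and> (\<forall>x\<in>set (Hmat r m). length x = 2^m)
   \<and> (\<forall>S. S \<subseteq> {..<2^m} \<longrightarrow> S \<noteq> {} \<longrightarrow> card S < 2^(r+1) \<longrightarrow> (\<exists>x\<in>set (Hmat r m). wt x S = 1))
   \<and> (\<exists>T. T \<subseteq> {..<2^m} \<and> card T = 2^(r+1) \<and> (\<forall>x\<in>set (Hmat r m). wt x T \<noteq> 1))"
proof (induction m arbitrary: r)
  case 0
  then show ?case by simp
next
  case (Suc m)
  show ?case
  proof (cases "r = 0")
    case True
    have H: "Hmat r (Suc m) = [replicate (2^Suc m) True]" using True H_zero[of "Suc m"] by (simp add: ones_row_def)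
    have c1: "\<exists>x\<in>set (Hmat r (Suc m)). wt x S = 1"
      if "S \<subseteq> {..<2^Suc m}" "S \<noteq> {}" "card S < 2^(r+1)" for S
    proof -
      have "card S > 0" using that fin_sub[OF that(1)] by (simp add: card_gt_0_iff)
      then have "card S = 1" using that(3) True by simp
      then show ?thesis using that(1) H by (simp add: wt_ones)
    qed
    have "(1::nat) < 2^Suc m" using one_less_power[of "2::nat" "Suc m"] by simp
    then have "{0,1} \<subseteq> {..<(2::nat)^Suc m}" by auto
    moreover have "wt (replicate (2^Suc m) True) {0,1} = 2"
      using wt_ones[OF \<open>{0,1} \<subseteq> {..<(2::nat)^Suc m}\<close>] by simp
    ultimately have c2: "\<exists>T. T \<subseteq> {..<2^Suc m} \<and> card T = 2^(r+1) \<and> (\<forall>x\<in>set (Hmat r (Suc m)). wt x T \<noteq> 1)"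
      using H True by (intro exI[of _ "{0,1}"]) auto
    show ?thesis using c1 c2 H by simp
  next
    case r0: False
    show ?thesis
    proof (cases "r = m")
      case True
      then have m0: "0 < m" using r0 by simp
      have H: "Hmat r (Suc m) = Gmat m (Suc m)" using True H_top[OF m0] by simp
      note GP = G_props[of m]
      have c1: "\<exists>x\<in>set (Hmat r (Suc m)). wt x S = 1"
        if "S \<subseteq> {..<2^Suc m}" "S \<noteq> {}" "card S < 2^(r+1)" for S
      proof -
        have "S \<noteq> {..<2^Suc m}" using that(3) True by auto
        then show ?thesis using GP that H by auto
      qed
      have c2: "\<exists>T. T \<subseteq> {..<2^Suc m} \<and> card T = 2^(r+1) \<and> (\<forall>x\<in>set (Hmat r (Suc m)). wt x T \<noteq> 1)"
        using GP H True by (intro exI[of _ "{..<2^Suc m}"]) auto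
      show ?thesis using c1 c2 H GP by simp
    next
      case False
      then have rm: "r < m" "0 < r" "0 < m" using Suc.prems r0 by auto
      define n where "n = (2::nat)^m"
      have N: "(2::nat)^Suc m = 2*n" by (simp add: n_def)
      have P: "(2::nat)^(r+1) = 2 * 2^r" by simp
      have Pr: "(2::nat)^(r-1+1) = 2^r" using rm by simp
      define A where "A = Hmat r m"
      define B where "B = Hmat (r-1) m"
      have H: "Hmat r (Suc m) = dup A @ zl n B @ zr n B"
        unfolding A_def B_def n_def using H_step[of r "Suc m"] rm by simp
      have IA: "A \<noteq> [] \<and> (\<forall>x\<in>set A. length x = n)
        \<and> (\<forall>S. S \<subseteq> {..<n} \<longrightarrow> S \<noteq> {} \<longrightarrow> card S < 2*2^r \<longrightarrow> (\<exists>x\<in>set A. wt x S = 1))"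
        using Suc.IH[OF rm(3) rm(1)] unfolding A_def n_def P by blast
      have IB: "B \<noteq> [] \<and> (\<forall>x\<in>set B. length x = n)
        \<and> (\<forall>S. S \<subseteq> {..<n} \<longrightarrow> S \<noteq> {} \<longrightarrow> card S < 2^r \<longrightarrow> (\<exists>x\<in>set B. wt x S = 1))
        \<and> (\<exists>T. T \<subseteq> {..<n} \<and> card T = 2^r \<and> (\<forall>x\<in>set B. wt x T \<noteq> 1))"
        using Suc.IH[OF rm(3), of "r-1"] rm unfolding B_def n_def Pr by simp
      have len: "\<forall>x\<in>set (Hmat r (Suc m)). length x = 2*n"
        unfolding H using IA IB by (auto simp: set_dup set_zl set_zr)
      have ne: "Hmat r (Suc m) \<noteq> []" unfolding H using IA by (simp add: dup_def)
      have c1: "\<exists>x\<in>set (Hmat r (Suc m)). wt x S = 1"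
        if S: "S \<subseteq> {..<2*n}" "S \<noteq> {}" "card S < 2*2^r" for S
      proof -
        define L where "L = {j\<in>S. j<n}"
        define R where "R = {k. n+k\<in>S}"
        have fS: "finite S" using fin_sub[OF S(1)] .
        have Lsub: "L \<subseteq> {..<n}" unfolding L_def by auto
        have Rsub: "R \<subseteq> {..<n}" unfolding R_def using hi_sub[OF S(1)] .
        have wS: "wt (a@b) S = wt a L + wt b R" if "length a = n" for a b
          using wt_append[OF fS that, of b] unfolding L_def R_def .
        have cS: "card S = card L + card R" using card_split[OF fS, of n] unfolding L_def R_def .
        have Se: "S = {} " if "L = {}" "R = {}" using cS fS that by simp
        consider (Re) "R = {}" | (Le) "L = {}" | (Ls) "L \<noteq> {}" "card L < 2^r" | (Rs) "R \<noteq> {}" "card R < 2^r"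
          using cS S(3) by linarith
        then show ?thesis
        proof cases
          case Re
          then have "L \<noteq> {}" "card L < 2*2^r" using Se S cS by auto
          then obtain x where x: "x \<in> set A" "wt x L = 1" using IA Lsub by blast
          have "x@x \<in> set (Hmat r (Suc m))" using x unfolding H by (auto simp: set_dup)
          moreover have "wt (x@x) S = 1" using wS[of x x] IA x Re wt_empty by simp
          ultimately show ?thesis by blast
        next
          case Le
          then have "R \<noteq> {}" "card R < 2*2^r" using Se S cS by auto
          then obtain x where x: "x \<in> set A" "wt x R = 1" using IA Rsub by blast
          have "x@x \<in> set (Hmat r (Suc m))" using x unfolding H by (auto simp: set_dup)
          moreover have "wt (x@x) S = 1" using wS[of x x] IA x Le wt_empty by simp
          ultimately show ?thesis by blast
        next
          case Ls
          then obtain x where x: "x \<in> set B" "wt x L = 1" using IB Lsub by blast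
          have "x @ replicate n False \<in> set (Hmat r (Suc m))" using x unfolding H by (auto simp: set_zr)
          moreover have "wt (x @ replicate n False) S = 1" using wS[of x] IB x wt_zero[OF Rsub] by simp
          ultimately show ?thesis by blast
        next
          case Rs
          then obtain x where x: "x \<in> set B" "wt x R = 1" using IB Rsub by blast
          have "replicate n False @ x \<in> set (Hmat r (Suc m))" using x unfolding H by (auto simp: set_zl)
          moreover have "wt (replicate n False @ x) S = 1" using wS[of "replicate n False" x] x wt_zero[OF Lsub] by simp
          ultimately show ?thesis by blast
        qed
      qed
      obtain T where T: "T \<subseteq> {..<n}" "card T = 2^r" "\<forall>x\<in>set B. wt x T \<noteq> 1" using IB by blast
      define U where "U = T \<union> (\<lambda>k. n+k) ` T"
      have Usub: "U \<subseteq> {..<2*n}" unfolding U_def using T(1) by auto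
      have fU: "finite U" using fin_sub[OF Usub] .
      have UL: "{j\<in>U. j<n} = T" unfolding U_def using T(1) by auto
      have UR: "{k. n+k\<in>U} = T" unfolding U_def using T(1) by auto
      have wU: "wt (a@b) U = wt a T + wt b T" if "length a = n" for a b
        using wt_append[OF fU that, of b] unfolding UL UR .
      have cU: "card U = 2*2^r" using card_split[OF fU, of n] unfolding UL UR T(2) by simp
      have wnot: "wt x U \<noteq> 1" if "x \<in> set (Hmat r (Suc m))" for x
      proof -
        from that consider (a) y where "y \<in> set A" "x = y@y" | (b) y where "y \<in> set B" "x = replicate n False @ y"
          | (c) y where "y \<in> set B" "x = y @ replicate n False"
          unfolding H by (auto simp: set_dup set_zl set_zr)
        then show ?thesis
        proof cases
          case a
          then have "wt x U = wt y T + wt y T" using wU[of y y] IA by simp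
          then show ?thesis by presburger
        next
          case b
          then show ?thesis using wU[of "replicate n False" y] T wt_zero[OF T(1)] by simp
        next
          case c
          then show ?thesis using wU[of y "replicate n False"] T IB wt_zero[OF T(1)] by simp
        qed
      qed
      show ?thesis unfolding N P using ne len c1 Usub cU wnot by blast
    qed
  qed
qed

theorem proposition12:
  fixes m r :: nat
  assumes "0 < m" and "r < m"
  shows "stopping_distance (Hmat r m) = 2 ^ (r + 1)"
proof -
  note HP = H_props[OF assms]
  have nc: "ncols (Hmat r m) = 2^m"
    using HP by (cases "Hmat r m") (auto simp: ncols_def)
  obtain T where T: "T \<subseteq> {..<2^m}" "card T = 2^(r+1)" "\<forall>x\<in>set (Hmat r m). wt x T \<noteq> 1"
    using HP by blast
  show ?thesis unfolding stopping_distance_def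
  proof (rule Greatest_equality)
    show "\<forall>S. S \<subseteq> {..<ncols (Hmat r m)} \<and> S \<noteq> {} \<and> card S \<le> 2^(r+1) - 1 \<longrightarrow> has_weight_one_row (Hmat r m) S"
    proof (intro allI impI)
      fix S assume S: "S \<subseteq> {..<ncols (Hmat r m)} \<and> S \<noteq> {} \<and> card S \<le> 2^(r+1) - 1"
      have "(0::nat) < 2^(r+1)" by simp
      then have "card S < 2^(r+1)" using S by linarith
      then show "has_weight_one_row (Hmat r m) S" using S HP nc unfolding hw1_wt by auto
    qed
  next
    fix y assume y: "\<forall>S. S \<subseteq> {..<ncols (Hmat r m)} \<and> S \<noteq> {} \<and> card S \<le> y - 1 \<longrightarrow> has_weight_one_row (Hmat r m) S"
    show "y \<le> 2^(r+1)"
    proof (rule ccontr)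
      assume "\<not> y \<le> 2^(r+1)"
      then have "card T \<le> y - 1" using T(2) by simp
      moreover have "T \<noteq> {}" using T(2) by auto
      ultimately have "has_weight_one_row (Hmat r m) T" using y T(1) nc by auto
      then show False using T(3) unfolding hw1_wt by auto
    qed
  qed
qed

end
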